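(* Let $p>1$, $x^0\in\mathbb{R}^n$, and let $\varphi:\mathbb{R}^n\to\mathbb{R}\cup\{+\infty\}$ be a proper lower semicontinuous coercive function. If for some $r>0$ and $\lambda\in\mathbb{R}$ we have $\{x:\varphi(x)\le\varphi(x^0)+\lambda\}\subseteq\mathbb{B}(0;r)$, then there exists $\hat\gamma>0$ such that for each $\gamma\in(0,\hat\gamma]$, $\{x:\varphi^p_\gamma(x)\le\varphi^p_\gamma(x^0)+\lambda\}\subseteq\mathbb{B}(0;r)$.
   Context: $\varphi^p_\gamma(x):=\inf_{y\in\mathbb{R}^n}\big(\varphi(y)+\frac{1}{p\gamma}\|x-y\|^p\big)$ (high-order Moreau envelope); $\mathbb{B}(0;r)$ is the open Euclidean ball of radius $r$ centered at the origin. *)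

theory Defs
  imports "HOL-Analysis.Analysis" "HOL-Library.Extended_Real"
begin

definition proper_fun :: "('a \<Rightarrow> ereal) \<Rightarrow> bool" where
  "proper_fun \<phi> \<longleftrightarrow> (\<forall>x. \<phi> x \<noteq> -\<infinity>) \<and> (\<exists>x. \<phi> x < \<infinity>)"

definition lsc :: "('a::topological_space \<Rightarrow> ereal) \<Rightarrow> bool" where
  "lsc \<phi> \<longleftrightarrow> (\<forall>x. \<phi> x \<le> Liminf (at x) \<phi>)"

definition coercive :: "('a::real_normed_vector \<Rightarrow> ereal) \<Rightarrow> bool" where
  "coercive \<phi> \<longleftrightarrow> filterlim \<phi> at_top at_infinity"

definition moreau_env :: "('a::real_normed_vector \<Rightarrow> ereal) \<Rightarrow> real \<Rightarrow> real \<Rightarrow> 'a \<Rightarrow> ereal" where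
  "moreau_env \<phi> p \<gamma> x = (INF y. \<phi> y + ereal (norm (x - y) powr p / (p * \<gamma>)))"

end

theory Submission
  imports Defs
begin

lemma lsc_open_super:
  fixes \<phi> :: "'a::topological_space \<Rightarrow> ereal"
  assumes "lsc \<phi>"
  shows "open {y. a < \<phi> y}"
proof (rule Topological_Spaces.openI)
  fix x assume "x \<in> {y. a < \<phi> y}"
  then have "a < Liminf (at x) \<phi>" using assms unfolding lsc_def
    using order_less_le_trans by blast
  then have "eventually (\<lambda>y. a < \<phi> y) (at x)" by (rule less_LiminfD)
  then obtain U where U: "open U" "x \<in> U" "\<And>y. y \<in> U \<Longrightarrow> y \<noteq> x \<Longrightarrow> a < \<phi> y"
    unfolding eventually_at_topological by blast
  show "\<exists>T. open T \<and> x \<in> T \<and> T \<subseteq> {y. a < \<phi> y}"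
    using U \<open>x \<in> {y. a < \<phi> y}\<close> by (intro exI[of _ U]) auto
qed

lemma lsc_closed_sub:
  fixes \<phi> :: "'a::topological_space \<Rightarrow> ereal"
  assumes "lsc \<phi>"
  shows "closed {y. \<phi> y \<le> a}"
proof -
  have "{y. \<phi> y \<le> a} = - {y. a < \<phi> y}" by auto
  then show ?thesis using lsc_open_super[OF assms] by (simp add: closed_def)
qed

lemma compact_incseq_cover:
  assumes "compact K" "\<And>k::nat. open (U k)" "\<And>k l. k \<le> l \<Longrightarrow> U k \<subseteq> U l"
    "K \<subseteq> (\<Union>k. U k)"
  shows "\<exists>N. K \<subseteq> U N"
proof -
  obtain D where D: "D \<subseteq> UNIV" "finite D" "K \<subseteq> (\<Union>k\<in>D. U k)"
    using compactE_image[of K UNIV U] assms by blast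
  have "(\<Union>k\<in>D. U k) \<subseteq> U (Max (insert 0 D))"
  proof
    fix x assume "x \<in> (\<Union>k\<in>D. U k)"
    then obtain k where "k \<in> D" "x \<in> U k" by blast
    then have "k \<le> Max (insert 0 D)" using D(2) by simp
    then show "x \<in> U (Max (insert 0 D))" using assms(3) \<open>x \<in> U k\<close> by blast
  qed
  then show ?thesis using D(3) by blast
qed

theorem corollary1:
  fixes \<phi> :: "real ^ 'n \<Rightarrow> ereal" and x0 :: "real ^ 'n" and p r lam :: real
  assumes "p > 1"
    and "proper_fun \<phi>" and "lsc \<phi>" and "coercive \<phi>"
    and "r > 0"
    and "{x. \<phi> x \<le> \<phi> x0 + ereal lam} \<subseteq> ball 0 r"
  shows "\<exists>\<gamma>hat>0. \<forall>\<gamma>. 0 < \<gamma> \<and> \<gamma> \<le> \<gamma>hat \<longrightarrow>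
           {x. moreau_env \<phi> p \<gamma> x \<le> moreau_env \<phi> p \<gamma> x0 + ereal lam} \<subseteq> ball 0 r"
proof -
  note lsc = assms(3)
  have ninf: "\<And>x. \<phi> x \<noteq> -\<infinity>" using assms(2) unfolding proper_fun_def by blast
  have "\<phi> x0 \<noteq> \<infinity>"
  proof
    assume "\<phi> x0 = \<infinity>"
    then have "UNIV \<subseteq> ball (0::real^'n) r" using assms(6) by auto
    obtain v :: "real^'n" where "norm v = r" using vector_choose_size[of r] assms(5) by auto
    moreover have "v \<in> ball 0 r" using \<open>UNIV \<subseteq> ball (0::real^'n) r\<close> by blast
    ultimately show False by simp
  qed
  then obtain a where a: "\<phi> x0 = ereal a" using ninf[of x0] by (cases "\<phi> x0") auto
  define c where "c = a + lam"
  have hS: "{x. \<phi> x \<le> ereal c} \<subseteq> ball 0 r" using assms(6) a by (simp add: c_def)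
  have "eventually (\<lambda>y. ereal (c + 2) \<le> \<phi> y) at_infinity"
    using assms(4) unfolding coercive_def filterlim_at_top by blast
  then have "eventually (\<lambda>y. ereal (c + 1) < \<phi> y) at_infinity"
  proof (rule eventually_mono)
    fix y assume "ereal (c + 2) \<le> \<phi> y"
    moreover have "ereal (c + 1) < ereal (c + 2)" by simp
    ultimately show "ereal (c + 1) < \<phi> y" by (rule less_le_trans[rotated])
  qed
  then obtain R where R: "\<And>y. R \<le> norm y \<Longrightarrow> ereal (c + 1) < \<phi> y"
    unfolding eventually_at_infinity by blast
  define K where "K = cball (0::real^'n) R - ball 0 r"
  have cK: "compact K" unfolding K_def by (simp add: compact_diff)
  obtain N where N: "K \<subseteq> {y. ereal (c + 1 / (real N + 1)) < \<phi> y}"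
  proof -
    have "\<exists>N. K \<subseteq> (\<lambda>k::nat. {y. ereal (c + 1 / (real k + 1)) < \<phi> y}) N"
    proof (rule compact_incseq_cover[OF cK])
      show "open ({y. ereal (c + 1 / (real k + 1)) < \<phi> y})" for k
        using lsc_open_super[OF lsc] .
      show "{y. ereal (c + 1 / (real k + 1)) < \<phi> y} \<subseteq> {y. ereal (c + 1 / (real l + 1)) < \<phi> y}"
        if "k \<le> l" for k l
      proof -
        have "1 / (real l + 1) \<le> 1 / (real k + 1)" using that by (simp add: frac_le)
        then have le: "ereal (c + 1 / (real l + 1)) \<le> ereal (c + 1 / (real k + 1))" by simp
        show ?thesis
        proof
          fix y assume "y \<in> {y. ereal (c + 1 / (real k + 1)) < \<phi> y}"
          then have "ereal (c + 1 / (real k + 1)) < \<phi> y" by simp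
          then show "y \<in> {y. ereal (c + 1 / (real l + 1)) < \<phi> y}"
            using order_le_less_trans[OF le] by simp
        qed
      qed
      show "K \<subseteq> (\<Union>k. {y. ereal (c + 1 / (real k + 1)) < \<phi> y})"
      proof
        fix y assume "y \<in> K"
        then have "\<not> \<phi> y \<le> ereal c" using hS unfolding K_def by auto
        then have "ereal c < \<phi> y" by simp
        then obtain e where e: "e > 0" "ereal (c + e) < \<phi> y"
        proof (cases "\<phi> y")
          case (real b)
          then show ?thesis using \<open>ereal c < \<phi> y\<close> that[of "(b - c)/2"] by (auto simp: field_simps)
        next
          case PInf then show ?thesis using that[of 1] by auto
        next
          case MInf then show ?thesis using ninf by auto
        qed
        obtain k :: nat where k: "1 / (real k + 1) < e"
        proof -
          obtain k :: nat where "inverse (real (Suc k)) < e" using reals_Archimedean[OF e(1)] by blast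
          then show ?thesis using that[of k] by (simp add: inverse_eq_divide add.commute)
        qed
        then have "ereal (c + 1 / (real k + 1)) < ereal (c + e)" by simp
        then have "ereal (c + 1 / (real k + 1)) < \<phi> y"
          using e(2) by (rule less_trans)
        then show "y \<in> (\<Union>k. {y. ereal (c + 1 / (real k + 1)) < \<phi> y})" by blast
      qed
    qed
    then show ?thesis using that by blast
  qed
  define \<epsilon> where "\<epsilon> = 1 / (real N + 1)"
  have eps: "\<epsilon> > 0" "\<epsilon> \<le> 1" unfolding \<epsilon>_def by auto
  have out: "ereal (c + \<epsilon>) < \<phi> y" if "norm y \<ge> r" for y
  proof (cases "norm y \<ge> R")
    case True
    have "ereal (c + \<epsilon>) \<le> ereal (c + 1)" using eps by simp
    then show ?thesis using R[OF True] by (rule order_le_less_trans)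
  next
    case False
    then have "y \<in> K" using that unfolding K_def by auto
    then show ?thesis using N unfolding \<epsilon>_def by blast
  qed
  define S where "S = {y. \<phi> y \<le> ereal (c + \<epsilon>)}"
  have "S \<subseteq> ball 0 r"
  proof
    fix y assume "y \<in> S"
    then have y1: "\<phi> y \<le> ereal (c + \<epsilon>)" unfolding S_def by simp
    show "y \<in> ball 0 r"
    proof (rule ccontr)
      assume "y \<notin> ball 0 r"
      then have "norm y \<ge> r" by simp
      then have "ereal (c + \<epsilon>) < \<phi> y" by (rule out)
      then show False using y1 by simp
    qed
  qed
  have "closed S" unfolding S_def by (rule lsc_closed_sub[OF lsc])
  moreover have "bounded S" by (rule bounded_subset[OF bounded_ball \<open>S \<subseteq> ball 0 r\<close>])
  ultimately have cS: "compact S" by (simp add: compact_eq_bounded_closed)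
  obtain d where d: "d > 0" "\<And>s t. s \<in> S \<Longrightarrow> t \<in> - ball 0 r \<Longrightarrow> d \<le> dist s t"
  proof -
    have "S \<inter> - ball 0 r = {}" using \<open>S \<subseteq> ball 0 r\<close> by blast
    then obtain d where "d > 0" "\<forall>x\<in>S. \<forall>y\<in>- ball 0 r. d \<le> dist x y"
      using separate_compact_closed[OF cS, of "- ball 0 r"] by auto
    then show ?thesis using that by blast
  qed
  obtain M :: nat where M: "cball 0 R \<subseteq> {y. ereal (- real M) < \<phi> y}"
  proof -
    have "\<exists>M. cball (0::real^'n) R \<subseteq> (\<lambda>k::nat. {y. ereal (- real k) < \<phi> y}) M"
    proof (rule compact_incseq_cover)
      show "compact (cball (0::real^'n) R)" by simp
      show "open ({y. ereal (- real k) < \<phi> y})" for k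
        using lsc_open_super[OF lsc] .
      show "{y. ereal (- real k) < \<phi> y} \<subseteq> {y. ereal (- real l) < \<phi> y}"
        if "k \<le> l" for k l
      proof
        fix y assume "y \<in> {y. ereal (- real k) < \<phi> y}"
        then have "ereal (- real k) < \<phi> y" by simp
        moreover have "ereal (- real l) \<le> ereal (- real k)" using that by simp
        ultimately have "ereal (- real l) < \<phi> y" by (rule order_le_less_trans[rotated])
        then show "y \<in> {y. ereal (- real l) < \<phi> y}" by simp
      qed
      show "cball 0 R \<subseteq> (\<Union>k. {y. ereal (- real k) < \<phi> y})"
      proof
        fix y :: "real^'n"
        obtain k :: nat where k: "ereal (- real k) < \<phi> y"
        proof (cases "\<phi> y")
          case (real b)
          obtain k :: nat where "- b < real k" using reals_Archimedean2 by blast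
          then show ?thesis using real that[of k] by auto
        next
          case PInf then show ?thesis using that[of 0] by auto
        next
          case MInf then show ?thesis using ninf by auto
        qed
        then show "y \<in> (\<Union>k. {y. ereal (- real k) < \<phi> y})" by blast
      qed
    qed
    then show ?thesis using that by blast
  qed
  define m where "m = min (- real M) (c + 1)"
  have lb: "ereal m \<le> \<phi> y" for y
  proof (cases "norm y \<ge> R")
    case True
    have "ereal m \<le> ereal (c + 1)" unfolding m_def by simp
    also have "\<dots> \<le> \<phi> y" using R[OF True] by (rule less_imp_le)
    finally show ?thesis .
  next
    case False
    then have "y \<in> cball 0 R" by auto
    then have "ereal (- real M) < \<phi> y" using M by blast
    moreover have "ereal m \<le> ereal (- real M)" unfolding m_def by simp
    ultimately show ?thesis by (meson order_trans less_imp_le)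
  qed
  define K0 where "K0 = max 1 (c + \<epsilon> - m)"
  define gh where "gh = d powr p / (p * K0)"
  have K0: "K0 > 0" unfolding K0_def by auto
  have gh: "gh > 0" unfolding gh_def using d(1) assms(1) K0 by auto
  show ?thesis
  proof (intro exI[of _ gh] conjI gh allI impI subsetI)
    fix \<gamma> x assume g: "0 < \<gamma> \<and> \<gamma> \<le> gh"
    assume "x \<in> {x. moreau_env \<phi> p \<gamma> x \<le> moreau_env \<phi> p \<gamma> x0 + ereal lam}"
    then have xin: "moreau_env \<phi> p \<gamma> x \<le> moreau_env \<phi> p \<gamma> x0 + ereal lam" by simp
    have e0: "moreau_env \<phi> p \<gamma> x0 \<le> ereal a"
      unfolding moreau_env_def using a
      by (intro INF_lower2[of x0]) (auto simp: assms(1))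
    show "x \<in> ball 0 r"
    proof (rule ccontr)
      assume "x \<notin> ball 0 r"
      then have xr: "norm x \<ge> r" by auto
      have "ereal (c + \<epsilon>) \<le> moreau_env \<phi> p \<gamma> x"
        unfolding moreau_env_def
      proof (rule INF_greatest)
        fix y :: "real^'n"
        have nn: "0 \<le> norm (x - y) powr p / (p * \<gamma>)" using g assms(1) by auto
        show "ereal (c + \<epsilon>) \<le> \<phi> y + ereal (norm (x - y) powr p / (p * \<gamma>))"
        proof (cases "y \<in> S")
          case False
          then have "ereal (c + \<epsilon>) \<le> \<phi> y" unfolding S_def by auto
          also have "\<phi> y = \<phi> y + ereal 0" by simp
          also have "\<dots> \<le> \<phi> y + ereal (norm (x - y) powr p / (p * \<gamma>))"
            using nn by (intro add_left_mono) simp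
          finally show ?thesis .
        next
          case True
          then have "d \<le> dist y x" using d(2)[of y x] \<open>x \<notin> ball 0 r\<close> by auto
          then have "d powr p \<le> norm (x - y) powr p" using d(1) assms(1)
            by (simp add: dist_norm norm_minus_commute powr_mono2)
          moreover have "d powr p / (p * gh) \<le> d powr p / (p * \<gamma>)"
            using g assms(1) d(1) by (intro divide_left_mono) auto
          moreover have "d powr p / (p * gh) = K0"
            unfolding gh_def using d(1) assms(1) K0 by (simp add: field_simps)
          moreover have "d powr p / (p * \<gamma>) \<le> norm (x - y) powr p / (p * \<gamma>)"
            using g assms(1) \<open>d powr p \<le> norm (x - y) powr p\<close> by (intro divide_right_mono) auto
          ultimately have "K0 \<le> norm (x - y) powr p / (p * \<gamma>)" by linarith
          then have "c + \<epsilon> \<le> m + norm (x - y) powr p / (p * \<gamma>)"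
            unfolding K0_def by linarith
          then have "ereal (c + \<epsilon>) \<le> ereal m + ereal (norm (x - y) powr p / (p * \<gamma>))"
            by simp
          also have "\<dots> \<le> \<phi> y + ereal (norm (x - y) powr p / (p * \<gamma>))"
            using lb[of y] by (rule add_right_mono)
          finally show ?thesis .
        qed
      qed
      also have "\<dots> \<le> moreau_env \<phi> p \<gamma> x0 + ereal lam" by (rule xin)
      also have "\<dots> \<le> ereal a + ereal lam" using e0 by (rule add_right_mono)
      finally have "c + \<epsilon> \<le> a + lam" by simp
      then show False using eps unfolding c_def by simp
    qed
  qed
qed

end
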